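(* Let $A\in\mathbb R^{N\times N}$ be a $Z$-matrix and let $p<1$. Then the equation $Ax=x^{p}$ has a solution $x\in\mathbb R^N$ with $x>0$ if and only if $A$ is a non-singular $M$-matrix.
   Context: Inequalities between vectors/matrices are componentwise; for $x\in(0,\infty)^N$, $x^p:=(x_1^p,\dots,x_N^p)^\top$. A matrix $A\in\mathbb R^{N\times N}$ is a $Z$-matrix if $A_{ij}\le 0$ for all $i\neq j$. A $Z$-matrix $A$ is an $M$-matrix if $A=s\,\mathrm{Id}-B$ for some matrix $B\ge 0$ and some $s\in\mathbb R$ with $s\ge\rho(B)$, where $\rho(B)$ is the spectral radius of $B$; it is a non-singular $M$-matrix if in addition it is invertible. *)

theory Defs
  imports "HOL-Analysis.Analysis"
begin

text \<open>Square real matrices are rendered as real^'n^'n with a finite index type 'n (N = CARD('n)).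
Componentwise order; x^p componentwise via powr.\<close>

definition Z_matrix :: "real^'n^'n \<Rightarrow> bool" where
  "Z_matrix A \<longleftrightarrow> (\<forall>i j. i \<noteq> j \<longrightarrow> A $ i $ j \<le> 0)"

definition cmatrix :: "real^'n^'n \<Rightarrow> complex^'n^'n" where
  "cmatrix B = (\<chi> i j. complex_of_real (B $ i $ j))"

definition spec_rad :: "real^'n^'n::finite \<Rightarrow> real" where
  "spec_rad B = Max {cmod l | l. \<exists>v::complex^'n. v \<noteq> 0 \<and> cmatrix B *v v = l *s v}"

definition M_matrix :: "real^'n^'n::finite \<Rightarrow> bool" where
  "M_matrix A \<longleftrightarrow> Z_matrix A \<and>
     (\<exists>s B. (\<forall>i j. 0 \<le> B $ i $ j) \<and> A = s *\<^sub>R mat 1 - B \<and> s \<ge> spec_rad B)"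

definition nonsingular_M_matrix :: "real^'n^'n::finite \<Rightarrow> bool" where
  "nonsingular_M_matrix A \<longleftrightarrow> M_matrix A \<and> invertible A"

definition vpowr :: "real^'n \<Rightarrow> real \<Rightarrow> real^'n" where
  "vpowr x p = (\<chi> i. (x $ i) powr p)"

end

theory Submission
  imports Defs "Jordan_Normal_Form.Spectral_Radius"
begin

no_notation vec_index (infixl "$" 100)

lemma eig_set_fin_ne:
  fixes C :: "complex^'n^'n::finite"
  shows "finite {l. \<exists>v. v \<noteq> 0 \<and> C *v v = l *s v}" "{l. \<exists>v. v \<noteq> 0 \<and> C *v v = l *s v} \<noteq> {}"
proof -
  define n where "n = CARD('n)"
  obtain h where h: "bij_betw h {0..<n} (UNIV::'n set)"
    using ex_bij_betw_nat_finite[of "UNIV::'n set"] unfolding n_def by auto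
  define M where "M = Matrix.mat n n (\<lambda>(i,j). C $ h i $ h j)"
  have M: "M \<in> carrier_mat n n" unfolding M_def by simp
  have sumr: "(\<Sum>j\<in>{0..<n}. g (h j)) = (\<Sum>k\<in>UNIV. g k)" for g :: "'n \<Rightarrow> complex"
    using sum.reindex_bij_betw[OF h] .
  have hsurj: "\<exists>i<n. h i = k" for k
    using h unfolding bij_betw_def by (metis UNIV_I atLeastLessThan_iff imageE)
  have "{l. \<exists>v. v \<noteq> 0 \<and> C *v v = l *s v} = Collect (eigenvalue M)"
  proof (rule Set.set_eqI, rule HOL.iffI)
    fix l assume "l \<in> {l. \<exists>v. v \<noteq> 0 \<and> C *v v = l *s v}"
    then obtain v where v: "v \<noteq> 0" "C *v v = l *s v" by auto
    define w where "w = vec n (\<lambda>i. v $ h i)"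
    have "w \<noteq> 0\<^sub>v n"
    proof
      assume "w = 0\<^sub>v n"
      then have "v $ h i = 0" if "i < n" for i
        using that unfolding w_def by (metis index_vec index_zero_vec(1))
      then have "v = 0"
      proof (subst Finite_Cartesian_Product.vec_eq_iff, intro allI)
        fix k
        assume z: "\<And>i. i < n \<Longrightarrow> v $ h i = 0"
        obtain i where "i < n" "h i = k" using hsurj by blast
        then show "v $ k = 0 $ k" using z by auto
      qed
      with v show False by simp
    qed
    moreover have "M *\<^sub>v w = l \<cdot>\<^sub>v w"
    proof (rule eq_vecI)
      fix i assume "i < dim_vec (l \<cdot>\<^sub>v w)"
      then have i: "i < n" unfolding w_def by simp
      have "vec_index (M *\<^sub>v w) i = (\<Sum>j\<in>{0..<n}. C $ h i $ h j * v $ h j)"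
        using i unfolding M_def w_def by (simp add: scalar_prod_def)
      also have "\<dots> = (C *v v) $ h i" using sumr[of "\<lambda>k. C $ h i $ k * v $ k"]
        by (simp add: matrix_vector_mult_def)
      also have "\<dots> = l * v $ h i" using v by simp
      finally show "vec_index (M *\<^sub>v w) i = vec_index (l \<cdot>\<^sub>v w) i" using i unfolding w_def by simp
    qed (simp add: M_def w_def)
    ultimately have "eigenvector M w l" unfolding eigenvector_def using M
      by (simp add: w_def)
    then show "l \<in> Collect (eigenvalue M)" unfolding eigenvalue_def by auto
  next
    fix l assume "l \<in> Collect (eigenvalue M)"
    then obtain w where w: "eigenvector M w l" unfolding eigenvalue_def by auto
    have wc: "w \<in> carrier_vec n" and w0: "w \<noteq> 0\<^sub>v n" and wl: "M *\<^sub>v w = l \<cdot>\<^sub>v w"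
      using w M unfolding eigenvector_def by auto
    define v where "v = (\<chi> k. vec_index w (inv_into {0..<n} h k))"
    have vh: "v $ h i = vec_index w i" if "i < n" for i
      using that h unfolding v_def bij_betw_def by (simp add: inv_into_f_f)
    have "v \<noteq> 0"
    proof
      assume "v = 0"
      then have "vec_index w i = 0" if "i < n" for i using vh[OF that] by simp
      then have "w = 0\<^sub>v n" using wc by (intro eq_vecI) auto
      with w0 show False by simp
    qed
    moreover have "C *v v = l *s v"
    proof (subst Finite_Cartesian_Product.vec_eq_iff, intro allI)
      fix k
      obtain i where i: "i < n" "h i = k" using hsurj by blast
      have "(C *v v) $ h i = (\<Sum>j\<in>{0..<n}. C $ h i $ h j * v $ h j)"
        using sumr[of "\<lambda>k. C $ h i $ k * v $ k"] by (simp add: matrix_vector_mult_def)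
      also have "\<dots> = (\<Sum>j\<in>{0..<n}. C $ h i $ h j * vec_index w j)"
        by (intro sum.cong) (auto simp: vh)
      also have "\<dots> = vec_index (M *\<^sub>v w) i"
        using i wc unfolding M_def by (simp add: scalar_prod_def)
      also have "\<dots> = l * v $ h i" using wl i(1) wc vh[OF i(1)] by simp
      finally show "(C *v v) $ k = (l *s v) $ k" using i by simp
    qed
    ultimately show "l \<in> {l. \<exists>v. v \<noteq> 0 \<and> C *v v = l *s v}" by auto
  qed
  moreover have "n > 0" unfolding n_def by simp
  ultimately show "finite {l. \<exists>v. v \<noteq> 0 \<and> C *v v = l *s v}" "{l. \<exists>v. v \<noteq> 0 \<and> C *v v = l *s v} \<noteq> {}"
    using card_finite_spectrum(1)[OF M] spectrum_non_empty[OF M] unfolding Spectral_Radius.spectrum_def by auto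
qed
lemma mat_shift: "(s *\<^sub>R Finite_Cartesian_Product.mat 1 - B) *v w = s *\<^sub>R w - B *v (w::real^'n)"
  by (simp add: matrix_vector_mult_diff_rdistrib scaleR_matrix_vector_assoc[symmetric] matrix_vector_mul_lid)

lemma mv_comp: "(B *v x) $ i = (\<Sum>j\<in>UNIV. B $ i $ j * x $ j)"
  by (simp add: matrix_vector_mult_def)

lemma Bv_nonneg:
  fixes B :: "real^'n^'n"
  assumes "\<forall>i j. 0 \<le> B $ i $ j" "\<forall>j. 0 \<le> z $ j"
  shows "0 \<le> (B *v z) $ i"
  unfolding mv_comp using assms by (intro sum_nonneg) auto

lemma cmatrix_real:
  "cmatrix B *v (\<chi> i. complex_of_real (w $ i)) = (\<chi> i. complex_of_real ((B *v w) $ i))"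
  by (simp add: Finite_Cartesian_Product.vec_eq_iff matrix_vector_mult_def cmatrix_def)

lemma eig_lt:
  fixes B :: "real^'n^'n" and x :: "real^'n"
  assumes B0: "\<forall>i j. 0 \<le> B $ i $ j" and xpos: "\<forall>i. 0 < x $ i"
    and Bx: "\<forall>i. (B *v x) $ i < s * x $ i"
    and v0: "v \<noteq> 0" and ev: "cmatrix B *v v = l *s v"
  shows "cmod l < s"
proof -
  define f where "f j = cmod (v $ j) / x $ j" for j
  define m where "m = Max (range f)"
  have "m \<in> range f" unfolding m_def by (intro Max_in) auto
  then obtain k where k: "f k = m" by auto
  have fle: "f j \<le> f k" for j unfolding k m_def by (intro Max_ge) auto
  obtain j where j: "v $ j \<noteq> 0" using v0 by (metis Finite_Cartesian_Product.vec_eq_iff zero_index)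
  have "0 < f j" unfolding f_def using j xpos by simp
  then have rpos: "0 < f k" using fle[of j] by linarith
  then have vk: "0 < cmod (v $ k)" unfolding f_def using xpos
    by (simp add: zero_less_divide_iff)
  have vj: "cmod (v $ j) \<le> f k * x $ j" for j
    using fle[of j] xpos unfolding f_def by (simp add: divide_le_eq)
  have "l * v $ k = (\<Sum>j\<in>UNIV. complex_of_real (B $ k $ j) * v $ j)"
    using ev[symmetric] by (simp add: Finite_Cartesian_Product.vec_eq_iff matrix_vector_mult_def cmatrix_def)
  then have "cmod l * cmod (v $ k) = cmod (\<Sum>j\<in>UNIV. complex_of_real (B $ k $ j) * v $ j)"
    by (metis norm_mult)
  also have "\<dots> \<le> (\<Sum>j\<in>UNIV. cmod (complex_of_real (B $ k $ j) * v $ j))"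
    by (rule norm_sum)
  also have "\<dots> = (\<Sum>j\<in>UNIV. B $ k $ j * cmod (v $ j))"
    using B0 by (simp add: norm_mult)
  also have "\<dots> \<le> (\<Sum>j\<in>UNIV. B $ k $ j * (f k * x $ j))"
    using B0 vj by (intro sum_mono mult_left_mono) auto
  also have "\<dots> = f k * (B *v x) $ k"
    by (simp add: mv_comp sum_distrib_left algebra_simps)
  also have "\<dots> < f k * (s * x $ k)"
    using Bx rpos by simp
  also have "\<dots> = s * cmod (v $ k)"
    unfolding f_def using xpos[rule_format, of k] by (simp add: field_simps)
  finally show ?thesis using vk by simp
qed

lemma inj_imp_surj_shift:
  fixes B :: "real^'n^'n"
  assumes "\<forall>w. t *\<^sub>R w - B *v w = 0 \<longrightarrow> w = 0"
  shows "\<exists>u. t *\<^sub>R u - B *v u = y"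
proof -
  have "invertible (t *\<^sub>R Finite_Cartesian_Product.mat 1 - B)"
    unfolding invertible_left_inverse matrix_left_invertible_ker mat_shift using assms by blast
  then have "surj ((*v) (t *\<^sub>R Finite_Cartesian_Product.mat 1 - B))" unfolding invertible_eq_bij bij_def by blast
  then obtain u where "(t *\<^sub>R Finite_Cartesian_Product.mat 1 - B) *v u = y" by (metis surjD)
  then show ?thesis unfolding mat_shift by blast
qed

lemma key_nonneg:
  fixes B :: "real^'n^'n"
  assumes B0: "\<forall>i j. 0 \<le> B $ i $ j"
    and vpos: "\<forall>i. 0 < v $ i" and Bv: "\<forall>i. (B *v v) $ i < t * v $ i"
    and By: "\<forall>i. (B *v y) $ i \<le> t * y $ i"
  shows "0 \<le> y $ i"
proof (rule ccontr)
  assume neg: "\<not> 0 \<le> y $ i"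
  define g where "g j = - y $ j / v $ j" for j
  define c where "c = Max (range g)"
  have "c \<in> range g" unfolding c_def by (intro Max_in) auto
  then obtain m where m: "g m = c" by auto
  have gle: "g j \<le> c" for j unfolding c_def by (intro Max_ge) auto
  have "0 < g i" unfolding g_def using neg vpos by (simp add: divide_neg_pos)
  then have cpos: "0 < c" using gle[of i] by linarith
  define z where "z = y + c *\<^sub>R v"
  have z0: "0 \<le> z $ j" for j
  proof -
    have vj: "0 < v $ j" using vpos by auto
    have "- y $ j / v $ j \<le> c" using gle[of j] unfolding g_def .
    then have "- y $ j \<le> c * v $ j" using vj by (metis minus_divide_left pos_divide_le_eq)
    then show ?thesis unfolding z_def by simp
  qed
  have zm: "z $ m = 0"
  proof -
    have vm: "0 < v $ m" using vpos by auto
    have "- y $ m / v $ m = c" using m unfolding g_def .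
    then have "- y $ m = c * v $ m" using vm by (metis minus_divide_left nonzero_divide_eq_eq less_irrefl)
    then show ?thesis unfolding z_def by simp
  qed
  have "(B *v z) $ m = (B *v y) $ m + c * (B *v v) $ m"
    unfolding z_def by (simp add: matrix_vector_right_distrib matrix_vector_mult_scaleR)
  also have "\<dots> < t * y $ m + c * (t * v $ m)"
    using By Bv cpos by (intro add_le_less_mono) auto
  also have "\<dots> = t * z $ m" unfolding z_def by (simp add: algebra_simps)
  finally have "(B *v z) $ m < 0" using zm by simp
  moreover have "0 \<le> (B *v z) $ m" using Bv_nonneg[OF B0] z0 by blast
  ultimately show False by simp
qed

lemma Mpos:
  fixes B :: "real^'n^'n"
  assumes B0: "\<forall>i j. 0 \<le> B $ i $ j"
    and injs: "\<forall>w. s *\<^sub>R w - B *v w = 0 \<longrightarrow> w = 0"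
    and eigb: "\<And>l v. v \<noteq> 0 \<Longrightarrow> cmatrix B *v v = l *s v \<Longrightarrow> cmod l \<le> s"
  shows "\<exists>v. (\<forall>i. 0 < v $ i) \<and> (\<forall>i. (B *v v) $ i < s * v $ i)"
proof -
  define P where "P t \<longleftrightarrow> (\<exists>v. (\<forall>i. 0 < v $ i) \<and> (\<forall>i. (B *v v) $ i < t * v $ i))" for t
  have up: "P t'" if "P t" "t \<le> t'" for t t'
  proof -
    obtain v where v: "\<forall>i. 0 < v $ i" "\<forall>i. (B *v v) $ i < t * v $ i" using \<open>P t\<close> P_def by auto
    have "(B *v v) $ i < t' * v $ i" for i
    proof -
      have "t * v $ i \<le> t' * v $ i" using \<open>t \<le> t'\<close> v(1) by (intro mult_right_mono) (auto intro: less_imp_le)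
      then show ?thesis using v(2)[rule_format, of i] by linarith
    qed
    then show ?thesis unfolding P_def using v(1) by blast
  qed
  have pos: "0 < t" if "P t" for t
  proof -
    obtain v where v: "\<forall>i. 0 < v $ i" "\<forall>i. (B *v v) $ i < t * v $ i" using \<open>P t\<close> P_def by auto
    have "0 \<le> (B *v v) $ i" for i using Bv_nonneg[OF B0] v(1) by (simp add: less_imp_le)
    then have "0 < t * v $ undefined" using v(2) by (meson le_less_trans)
    then show ?thesis using v(1)[rule_format, of undefined] by (simp add: zero_less_mult_iff)
  qed
  have opn: "\<exists>t'<t. P t'" if "P t" for t
  proof -
    obtain v where v: "\<forall>i. 0 < v $ i" "\<forall>i. (B *v v) $ i < t * v $ i" using \<open>P t\<close> P_def by auto
    define d where "d i = t - (B *v v) $ i / v $ i" for i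
    define \<delta> where "\<delta> = Min (range d)"
    have "\<delta> \<in> range d" unfolding \<delta>_def by (intro Min_in) auto
    then have dpos: "0 < \<delta>" using v unfolding d_def by (auto simp: divide_less_eq)
    have dle: "\<delta> \<le> d i" for i unfolding \<delta>_def by (intro Min_le) auto
    have "(B *v v) $ i < (t - \<delta>/2) * v $ i" for i
    proof -
      have "(B *v v) $ i / v $ i < t - \<delta>/2" using dle[of i] dpos unfolding d_def by simp
      then show ?thesis using v(1) by (simp add: divide_less_eq)
    qed
    then have "P (t - \<delta>/2)" unfolding P_def using v(1) by blast
    then show ?thesis using dpos by (intro exI[of _ "t - \<delta>/2"]) auto
  qed
  define t0 where "t0 = 1 + (\<Sum>i\<in>UNIV. \<Sum>j\<in>UNIV. B $ i $ j)"
  have "P t0"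
  proof -
    have "(B *v (\<chi> i. 1)) $ i < t0 * (\<chi> i. (1::real)) $ i" for i
    proof -
      have "(\<Sum>j\<in>UNIV. B $ i $ j) \<le> (\<Sum>i\<in>UNIV. \<Sum>j\<in>UNIV. B $ i $ j)"
        by (rule member_le_sum) (use B0 in \<open>auto intro: sum_nonneg\<close>)
      then show ?thesis unfolding t0_def by (simp add: mv_comp)
    qed
    then show ?thesis unfolding P_def by (intro exI[of _ "\<chi> i. 1"]) auto
  qed
  define T where "T = Inf (Collect P)"
  have bdd: "bdd_below (Collect P)" using pos by (intro bdd_belowI[of _ 0]) (auto intro: less_imp_le)
  have ne: "Collect P \<noteq> {}" using \<open>P t0\<close> by auto
  have PgtT: "P t" if Tt: "T < t" for t
  proof -
    have "Inf (Collect P) < t" using Tt unfolding T_def .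
    then obtain t' where "t' \<in> Collect P" "t' < t" using cInf_lessD[OF ne] by blast
    then show ?thesis using up by auto
  qed
  have injt: "\<forall>w. t *\<^sub>R w - B *v w = 0 \<longrightarrow> w = 0" if "s \<le> t" for t
  proof (cases "t = s")
    case True then show ?thesis using injs by simp
  next
    case False
    with that have st: "s < t" by simp
    show ?thesis
    proof (intro allI impI, rule ccontr)
      fix w assume w: "t *\<^sub>R w - B *v w = 0" "w \<noteq> 0"
      define wc where "wc = (\<chi> i. complex_of_real (w $ i))"
      have "wc \<noteq> 0" using w(2) unfolding wc_def by (auto simp: Finite_Cartesian_Product.vec_eq_iff)
      moreover have "cmatrix B *v wc = complex_of_real t *s wc"
        using w(1) unfolding wc_def cmatrix_real by (auto simp: Finite_Cartesian_Product.vec_eq_iff simp flip: of_real_mult)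
      ultimately have "cmod (complex_of_real t) \<le> s" by (rule eigb)
      then show False using st by simp
    qed
  qed
  have "T < s"
  proof (rule ccontr)
    assume "\<not> T < s"
    then have sT: "s \<le> T" by simp
    obtain u where u: "T *\<^sub>R u - B *v u = (\<chi> i. 1)"
      using inj_imp_surj_shift[OF injt[OF sT]] by blast
    have ucomp: "(B *v u) $ i = T * u $ i - 1" for i
      using arg_cong[OF u, of "\<lambda>z. z $ i"] by simp
    define \<epsilon> where "\<epsilon> = 1 / (1 + (\<Sum>i\<in>UNIV. \<bar>u $ i\<bar>))"
    have sp: "0 \<le> (\<Sum>i\<in>UNIV. \<bar>u $ i\<bar>)" by (rule sum_nonneg) auto
    have epos: "0 < \<epsilon>" unfolding \<epsilon>_def using sp by (intro divide_pos_pos) linarith+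
    have "P (T + \<epsilon>)" using epos by (intro PgtT) simp
    then obtain v where v: "\<forall>i. 0 < v $ i" "\<forall>i. (B *v v) $ i < (T + \<epsilon>) * v $ i"
      unfolding P_def by auto
    have "(B *v u) $ i \<le> (T + \<epsilon>) * u $ i" for i
    proof -
      have "\<bar>u $ i\<bar> \<le> (\<Sum>i\<in>UNIV. \<bar>u $ i\<bar>)" by (rule member_le_sum) auto
      define S where "S = (\<Sum>i\<in>UNIV. \<bar>u $ i\<bar>)"
      have S1: "0 < 1 + S" using sp unfolding S_def by linarith
      have "\<epsilon> * \<bar>u $ i\<bar> = \<bar>u $ i\<bar> / (1 + S)" unfolding \<epsilon>_def S_def by simp
      also have "\<dots> \<le> 1" using S1 \<open>\<bar>u $ i\<bar> \<le> (\<Sum>i\<in>UNIV. \<bar>u $ i\<bar>)\<close>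
        unfolding S_def[symmetric] by (simp add: pos_divide_le_eq)
      finally have e1: "\<epsilon> * \<bar>u $ i\<bar> \<le> 1" .
      have "\<epsilon> * (- u $ i) \<le> \<epsilon> * \<bar>u $ i\<bar>" using epos by (intro mult_left_mono) auto
      then have "- 1 \<le> \<epsilon> * u $ i" using e1 by simp
      then show ?thesis unfolding ucomp by (simp add: algebra_simps)
    qed
    then have u0: "0 \<le> u $ i" for i using key_nonneg[OF B0 v] by blast
    have "P T"
    proof -
      have "0 \<le> (B *v u) $ i" for i using Bv_nonneg[OF B0] u0 by blast
      then have Tu: "1 \<le> T * u $ i" for i using ucomp[of i] by (metis diff_ge_0_iff_ge)
      have "0 < u $ i" for i
      proof (rule ccontr)
        assume "\<not> 0 < u $ i"
        with u0[of i] have "u $ i = 0" by simp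
        with Tu[of i] show False by simp
      qed
      moreover have "(B *v u) $ i < T * u $ i" for i using ucomp by simp
      ultimately show ?thesis unfolding P_def by blast
    qed
    then obtain t' where "t' < T" "P t'" using opn by blast
    moreover have "T \<le> t'" unfolding T_def using \<open>P t'\<close> bdd by (intro cInf_lower) auto
    ultimately show False by simp
  qed
  then have "P s" using PgtT by blast
  then show ?thesis unfolding P_def .
qed
lemma cont_pt:
  fixes a c p e :: real
  assumes "0 < a" "0 < e"
  shows "\<exists>d>0. \<forall>\<tau>. \<bar>\<tau> - a\<bar> < d \<longrightarrow> \<bar>(c * \<tau> - \<tau> powr p) - (c * a - a powr p)\<bar> < e"
proof -
  have "isCont (\<lambda>\<tau>. c * \<tau> - \<tau> powr p) a" using assms by (intro continuous_intros) auto
  then show ?thesis using assms(2) unfolding continuous_at_eps_delta dist_real_def by blast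
qed

definition upd :: "real^'n \<Rightarrow> 'n \<Rightarrow> real \<Rightarrow> real^'n" where
  "upd x i t = (\<chi> j. if j = i then t else x $ j)"

lemma upd_nth: "upd x i t $ j = (if j = i then t else x $ j)"
  unfolding upd_def by simp

lemma Gdiff:
  "(A *v upd x i t) $ i - (A *v x) $ i = A $ i $ i * (t - x $ i)"
proof -
  have "(A *v upd x i t) $ i - (A *v x) $ i = (\<Sum>j\<in>UNIV. A $ i $ j * (upd x i t $ j - x $ j))"
    by (simp add: mv_comp sum_subtractf algebra_simps)
  also have "\<dots> = (\<Sum>j\<in>UNIV. if j = i then A $ i $ i * (t - x $ i) else 0)"
    by (intro sum.cong) (auto simp: upd_nth)
  also have "\<dots> = A $ i $ i * (t - x $ i)" by simp
  finally show ?thesis .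
qed

lemma anti:
  fixes A :: "real^'n^'n"
  assumes Z: "Z_matrix A" and xy: "\<forall>j. x $ j \<le> y $ j" and eq: "x $ i = y $ i"
  shows "(A *v y) $ i - y $ i powr p \<le> (A *v x) $ i - x $ i powr p"
proof -
  have "(A *v y) $ i - (A *v x) $ i = (\<Sum>j\<in>UNIV. A $ i $ j * (y $ j - x $ j))"
    by (simp add: mv_comp sum_subtractf algebra_simps)
  also have "\<dots> \<le> 0"
  proof (rule sum_nonpos)
    fix j
    show "A $ i $ j * (y $ j - x $ j) \<le> 0"
    proof (cases "j = i")
      case True then show ?thesis using eq by simp
    next
      case False
      then have "A $ i $ j \<le> 0" using Z unfolding Z_matrix_def by auto
      moreover have "0 \<le> y $ j - x $ j" using xy by auto
      ultimately show ?thesis by (simp add: mult_nonpos_nonneg)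
    qed
  qed
  finally show ?thesis using eq by simp
qed

lemma sandwich:
  fixes A :: "real^'n^'n" and lo hi :: "real^'n"
  assumes Z: "Z_matrix A" and lopos: "\<forall>i. 0 < lo $ i" and lohi: "\<forall>i. lo $ i \<le> hi $ i"
    and Flo: "\<forall>i. (A *v lo) $ i \<le> lo $ i powr p"
    and Fhi: "\<forall>i. hi $ i powr p \<le> (A *v hi) $ i"
  shows "\<exists>x. (\<forall>i. 0 < x $ i) \<and> (\<forall>i. (A *v x) $ i = x $ i powr p)"
proof -
  define G where "G i x = (A *v x) $ i - x $ i powr p" for i x
  have Gupd: "G i (upd x i t) = G i x + ((A $ i $ i * t - t powr p) - (A $ i $ i * x $ i - x $ i powr p))" for x i t
    using Gdiff[of A x i t] unfolding G_def by (simp add: upd_nth algebra_simps)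
  have antiG: "G i y \<le> G i x" if "\<forall>j. x $ j \<le> y $ j" "x $ i = y $ i" for x y i
    unfolding G_def using anti[OF Z that] .
  define S where "S = {x. (\<forall>j. lo $ j \<le> x $ j \<and> x $ j \<le> hi $ j) \<and> (\<forall>j. 0 \<le> G j x)}"
  have hiS: "hi \<in> S" unfolding S_def G_def using lohi Fhi by auto
  define xs where "xs = (\<chi> i. Inf ((\<lambda>x. x $ i) ` S))"
  have ne: "(\<lambda>x. x $ i) ` S \<noteq> {}" for i using hiS by auto
  have bdd: "bdd_below ((\<lambda>x. x $ i) ` S)" for i
    by (rule bdd_belowI[of _ "lo $ i"]) (auto simp: S_def)
  have xs_le: "xs $ i \<le> x $ i" if "x \<in> S" for x i
    unfolding xs_def using that bdd by (auto intro: cInf_lower)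
  have lo_le: "lo $ i \<le> xs $ i" for i
    unfolding xs_def using ne by (auto intro!: cInf_greatest simp: S_def)
  have xs_hi: "xs $ i \<le> hi $ i" for i using xs_le[OF hiS] .
  have xs_pos: "0 < xs $ i" for i using lopos lo_le[of i] by (meson less_le_trans)
  have lessD: "\<exists>x\<in>S. x $ i < t" if "xs $ i < t" for i t
  proof -
    have "Inf ((\<lambda>x. x $ i) ` S) < t" using that unfolding xs_def by simp
    then obtain y where "y \<in> (\<lambda>x. x $ i) ` S" "y < t" using cInf_lessD[OF ne] by blast
    then show ?thesis by auto
  qed
  have c1: "0 \<le> G i xs" for i
  proof (rule ccontr)
    assume "\<not> 0 \<le> G i xs"
    then have neg: "0 < - G i xs" by simp
    obtain d where d: "d > 0" "\<forall>\<tau>. \<bar>\<tau> - xs $ i\<bar> < d \<longrightarrow>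
        \<bar>(A $ i $ i * \<tau> - \<tau> powr p) - (A $ i $ i * xs $ i - xs $ i powr p)\<bar> < - G i xs"
      using cont_pt[OF xs_pos neg] by blast
    obtain x where x: "x \<in> S" "x $ i < xs $ i + d" using lessD[of i "xs $ i + d"] d(1) by auto
    have "xs $ i \<le> x $ i" using xs_le[OF x(1)] .
    then have "\<bar>x $ i - xs $ i\<bar> < d" using x(2) by simp
    then have "G i (upd xs i (x $ i)) < 0" using d(2) unfolding Gupd by fastforce
    moreover have "G i x \<le> G i (upd xs i (x $ i))"
      by (rule antiG) (auto simp: upd_nth xs_le[OF x(1)])
    moreover have "0 \<le> G i x" using x(1) unfolding S_def by auto
    ultimately show False by simp
  qed
  then have xsS: "xs \<in> S" unfolding S_def using lo_le xs_hi by auto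
  have c2: "G i xs \<le> 0" for i
  proof (rule ccontr)
    assume "\<not> G i xs \<le> 0"
    then have gpos: "0 < G i xs" by simp
    have lt: "lo $ i < xs $ i"
    proof (rule ccontr)
      assume "\<not> lo $ i < xs $ i"
      then have "lo $ i = xs $ i" using lo_le[of i] by simp
      then have "G i xs \<le> G i lo" using lo_le by (intro antiG) auto
      moreover have "G i lo \<le> 0" unfolding G_def using Flo by auto
      ultimately show False using gpos by simp
    qed
    obtain d where d: "d > 0" "\<forall>\<tau>. \<bar>\<tau> - xs $ i\<bar> < d \<longrightarrow>
        \<bar>(A $ i $ i * \<tau> - \<tau> powr p) - (A $ i $ i * xs $ i - xs $ i powr p)\<bar> < G i xs"
      using cont_pt[OF xs_pos gpos] by blast
    define \<tau> where "\<tau> = max (lo $ i) (xs $ i - d / 2)"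
    have t1: "\<tau> < xs $ i" unfolding \<tau>_def using lt d(1) by simp
    have t2: "\<bar>\<tau> - xs $ i\<bar> < d" unfolding \<tau>_def using lt d(1) by (simp add: abs_if)
    define y where "y = upd xs i \<tau>"
    have Gi: "0 < G i y" unfolding y_def Gupd using d(2) t2 by fastforce
    have yle: "\<forall>j. y $ j \<le> xs $ j" unfolding y_def using t1 by (simp add: upd_nth)
    have Gj: "0 \<le> G j y" for j
    proof (cases "j = i")
      case True then show ?thesis using Gi by simp
    next
      case False
      then have "G j xs \<le> G j y" using yle by (intro antiG) (auto simp: y_def upd_nth)
      then show ?thesis using c1[of j] by simp
    qed
    have "y \<in> S" unfolding S_def
    proof (intro CollectI conjI allI)
      fix j
      show "lo $ j \<le> y $ j" unfolding y_def \<tau>_def using lo_le[of j] by (auto simp: upd_nth)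
      show "y $ j \<le> hi $ j" using yle xs_hi[of j] by (meson order_trans)
      show "0 \<le> G j y" by (rule Gj)
    qed
    then have "xs $ i \<le> y $ i" by (rule xs_le)
    then show False using t1 unfolding y_def by (simp add: upd_nth)
  qed
  have "(A *v xs) $ i = xs $ i powr p" for i using c1[of i] c2[of i] unfolding G_def by simp
  then show ?thesis using xs_pos by blast
qed

lemma root_fact:
  fixes K p :: real
  assumes K: "0 < K" and p: "p < 1"
  shows "0 < K powr (1/(1-p))" "K powr (1/(1-p)) = (K powr (1/(1-p))) powr p * K"
proof -
  define t where "t = K powr (1/(1-p))"
  show "0 < K powr (1/(1-p))" using K by simp
  have "t powr (1 - p) = K" unfolding t_def using K p by (simp add: powr_powr)
  moreover have "t = t powr p * t powr (1 - p)" unfolding t_def using K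
    by (simp add: powr_add[symmetric])
  ultimately show "K powr (1/(1-p)) = (K powr (1/(1-p))) powr p * K" unfolding t_def by simp
qed

lemma exist_from_v:
  fixes A :: "real^'n^'n" and v :: "real^'n"
  assumes Z: "Z_matrix A" and p: "p < 1" and vpos: "\<forall>i. 0 < v $ i"
    and wpos: "\<forall>i. 0 < (A *v v) $ i"
  shows "\<exists>x. (\<forall>i. 0 < x $ i) \<and> A *v x = vpowr x p"
proof -
  define w where "w = A *v v"
  define K where "K = 1 + (\<Sum>i\<in>UNIV. v $ i powr p / w $ i)"
  define K' where "K' = 1 + (\<Sum>i\<in>UNIV. w $ i / v $ i powr p)"
  have wi: "0 < w $ i" for i using wpos unfolding w_def by auto
  have vp: "0 < v $ i powr p" for i using vpos[rule_format, of i] by simp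
  have s1: "0 \<le> (\<Sum>i\<in>UNIV. v $ i powr p / w $ i)" using wi vp
    by (intro sum_nonneg) (auto intro: less_imp_le)
  have s2: "0 \<le> (\<Sum>i\<in>UNIV. w $ i / v $ i powr p)" using wi vp
    by (intro sum_nonneg) (auto intro: less_imp_le)
  have K1: "1 \<le> K" and K'1: "1 \<le> K'" unfolding K_def K'_def using s1 s2 by linarith+
  define k where "k = 1 / K'"
  have kpos: "0 < k" and k1: "k \<le> 1" unfolding k_def using K'1 by auto
  define t where "t = K powr (1/(1-p))"
  define r where "r = k powr (1/(1-p))"
  have tpos: "0 < t" and teq: "t = t powr p * K" unfolding t_def using root_fact[of K p] K1 p by auto
  have rpos: "0 < r" and req: "r = r powr p * k" unfolding r_def using root_fact[of k p] kpos p by auto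
  have rt: "r \<le> t" unfolding r_def t_def using p kpos k1 K1
    by (intro powr_mono2) auto
  have ex: "\<exists>x. (\<forall>i. 0 < x $ i) \<and> (\<forall>i. (A *v x) $ i = x $ i powr p)"
  proof (rule sandwich[OF Z, of "r *\<^sub>R v" "t *\<^sub>R v"])
    show "\<forall>i. 0 < (r *\<^sub>R v) $ i" using rpos vpos by simp
    show "\<forall>i. (r *\<^sub>R v) $ i \<le> (t *\<^sub>R v) $ i" using rt vpos by (simp add: less_imp_le mult_right_mono)
    show "\<forall>i. (A *v r *\<^sub>R v) $ i \<le> (r *\<^sub>R v) $ i powr p"
    proof
      fix i
      have "w $ i / v $ i powr p \<le> (\<Sum>i\<in>UNIV. w $ i / v $ i powr p)"
        using wi vp by (intro member_le_sum) (auto intro: less_imp_le)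
      then have "w $ i / v $ i powr p \<le> K'" unfolding K'_def by linarith
      then have "k * w $ i \<le> v $ i powr p" unfolding k_def using vp[of i] K'1
        by (simp add: field_simps)
      then have "r powr p * (k * w $ i) \<le> r powr p * v $ i powr p"
        by (intro mult_left_mono) auto
      moreover have "(A *v r *\<^sub>R v) $ i = r * w $ i" unfolding w_def by (simp add: matrix_vector_mult_scaleR)
      moreover have "(r *\<^sub>R v) $ i powr p = r powr p * v $ i powr p"
        using rpos vpos by (simp add: powr_mult less_imp_le)
      ultimately show "(A *v r *\<^sub>R v) $ i \<le> (r *\<^sub>R v) $ i powr p"
        using req by (metis mult.assoc)
    qed
    show "\<forall>i. (t *\<^sub>R v) $ i powr p \<le> (A *v t *\<^sub>R v) $ i"
    proof
      fix i
      have "v $ i powr p / w $ i \<le> (\<Sum>i\<in>UNIV. v $ i powr p / w $ i)"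
        using wi vp by (intro member_le_sum) (auto intro: less_imp_le)
      then have "v $ i powr p / w $ i \<le> K" unfolding K_def by linarith
      then have "v $ i powr p \<le> K * w $ i" using wi[of i] by (simp add: pos_divide_le_eq)
      then have "t powr p * v $ i powr p \<le> t powr p * (K * w $ i)"
        by (intro mult_left_mono) auto
      moreover have "(A *v t *\<^sub>R v) $ i = t * w $ i" unfolding w_def by (simp add: matrix_vector_mult_scaleR)
      moreover have "(t *\<^sub>R v) $ i powr p = t powr p * v $ i powr p"
        using tpos vpos by (simp add: powr_mult less_imp_le)
      ultimately show "(t *\<^sub>R v) $ i powr p \<le> (A *v t *\<^sub>R v) $ i"
        using teq by (metis mult.assoc)
    qed
  qed
  then obtain x where "\<forall>i. 0 < x $ i" "\<forall>i. (A *v x) $ i = x $ i powr p" by blast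
  then show ?thesis unfolding vpowr_def by (intro exI[of _ x]) (auto simp: Finite_Cartesian_Product.vec_eq_iff)
qed

theorem theorem3p4:
  fixes A :: "real^'n^'n::finite" and p :: real
  assumes "Z_matrix A" and "p < 1"
  shows "(\<exists>x::real^'n. (\<forall>i. x $ i > 0) \<and> A *v x = vpowr x p) \<longleftrightarrow> nonsingular_M_matrix A"
proof
  assume "\<exists>x::real^'n. (\<forall>i. x $ i > 0) \<and> A *v x = vpowr x p"
  then obtain x :: "real^'n" where xpos: "\<forall>i. 0 < x $ i" and xe: "A *v x = vpowr x p" by blast
  define s where "s = 1 + (\<Sum>i\<in>UNIV. \<bar>A $ i $ i\<bar>)"
  define B where "B = s *\<^sub>R Finite_Cartesian_Product.mat 1 - A"
  have Bij: "B $ i $ j = (if i = j then s else 0) - A $ i $ j" for i j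
    unfolding B_def by (simp add: Finite_Cartesian_Product.mat_def)
  have B0: "\<forall>i j. 0 \<le> B $ i $ j"
  proof (intro allI)
    fix i j
    show "0 \<le> B $ i $ j"
    proof (cases "i = j")
      case True
      have "\<bar>A $ i $ i\<bar> \<le> (\<Sum>i\<in>UNIV. \<bar>A $ i $ i\<bar>)" by (rule member_le_sum) auto
      then show ?thesis unfolding Bij s_def using True by auto
    next
      case False
      then show ?thesis unfolding Bij using assms(1) unfolding Z_matrix_def by auto
    qed
  qed
  have AB: "A = s *\<^sub>R Finite_Cartesian_Product.mat 1 - B" unfolding B_def by simp
  have Bx: "\<forall>i. (B *v x) $ i < s * x $ i"
  proof
    fix i
    have "B *v x = s *\<^sub>R x - A *v x" unfolding B_def by (rule mat_shift)
    then have "(B *v x) $ i = s * x $ i - x $ i powr p" using xe unfolding vpowr_def by simp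
    moreover have "0 < x $ i powr p" using xpos[rule_format, of i] by simp
    ultimately show "(B *v x) $ i < s * x $ i" by simp
  qed
  define E where "E = {l. \<exists>v. v \<noteq> 0 \<and> cmatrix B *v v = l *s v}"
  have ES: "{cmod l | l. \<exists>v. v \<noteq> 0 \<and> cmatrix B *v v = l *s v} = cmod ` E" unfolding E_def by blast
  have "spec_rad B \<in> cmod ` E" unfolding spec_rad_def ES
    using eig_set_fin_ne[of "cmatrix B"] unfolding E_def[symmetric] by (intro Max_in) auto
  then obtain l where "l \<in> E" "spec_rad B = cmod l" by blast
  then have "spec_rad B < s" using eig_lt[OF B0 xpos Bx] unfolding E_def by auto
  then have M: "M_matrix A" unfolding M_matrix_def using assms(1) B0 AB by (intro conjI exI[of _ s] exI[of _ B]) auto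
  have "\<forall>w. A *v w = 0 \<longrightarrow> w = 0"
  proof (intro allI impI, rule ccontr)
    fix w :: "real^'n" assume w: "A *v w = 0" "w \<noteq> 0"
    define wc where "wc = (\<chi> i. complex_of_real (w $ i))"
    have "wc \<noteq> 0" using w(2) unfolding wc_def by (auto simp: Finite_Cartesian_Product.vec_eq_iff)
    moreover have "s *\<^sub>R w - B *v w = 0" using w(1) unfolding AB mat_shift .
    then have "cmatrix B *v wc = complex_of_real s *s wc"
      unfolding wc_def cmatrix_real by (auto simp: Finite_Cartesian_Product.vec_eq_iff simp flip: of_real_mult)
    ultimately have "cmod (complex_of_real s) < s" by (rule eig_lt[OF B0 xpos Bx])
    then show False by simp
  qed
  then have "invertible A" unfolding invertible_left_inverse matrix_left_invertible_ker .
  with M show "nonsingular_M_matrix A" unfolding nonsingular_M_matrix_def by simp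
next
  assume "nonsingular_M_matrix A"
  then obtain s B where B0: "\<forall>i j. 0 \<le> B $ i $ j" and AB: "A = s *\<^sub>R Finite_Cartesian_Product.mat 1 - B"
    and sB: "s \<ge> spec_rad B" and inv: "invertible A"
    unfolding nonsingular_M_matrix_def M_matrix_def by blast
  have injs: "\<forall>w. s *\<^sub>R w - B *v w = 0 \<longrightarrow> w = 0"
    using inv unfolding invertible_left_inverse matrix_left_invertible_ker AB mat_shift .
  have eigb: "cmod l \<le> s" if "v \<noteq> 0" "cmatrix B *v v = l *s v" for l v
  proof -
    define E where "E = {l. \<exists>v. v \<noteq> 0 \<and> cmatrix B *v v = l *s v}"
    have ES: "{cmod l | l. \<exists>v. v \<noteq> 0 \<and> cmatrix B *v v = l *s v} = cmod ` E" unfolding E_def by blast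
    have "cmod l \<le> spec_rad B" unfolding spec_rad_def ES
      using eig_set_fin_ne(1)[of "cmatrix B"] that unfolding E_def[symmetric]
      by (intro Max_ge) (auto simp: E_def)
    then show ?thesis using sB by simp
  qed
  obtain v where vpos: "\<forall>i. 0 < v $ i" and Bv: "\<forall>i. (B *v v) $ i < s * v $ i"
  proof -
    have "\<exists>v. (\<forall>i. 0 < v $ i) \<and> (\<forall>i. (B *v v) $ i < s * v $ i)"
      by (rule Mpos[OF B0 injs]) (rule eigb)
    then show ?thesis using that by blast
  qed
  have "\<forall>i. 0 < (A *v v) $ i" unfolding AB mat_shift using Bv by simp
  then show "\<exists>x::real^'n. (\<forall>i. x $ i > 0) \<and> A *v x = vpowr x p"
    using exist_from_v[OF assms(1) assms(2) vpos] by blast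
qed

end
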